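(* Let $(a_0,\ldots,a_n)$ be a finite sequence of positive integers. For every $\varepsilon>0$ there is $m_0>0$ such that for every integer $m\ge m_0$ and every positive integer $N$, $$\Phi^1(\beta^{N+1})-\Phi^1(\beta^N)<\frac{\varepsilon}{2}.$$
   Context: For positive integers $d_0,d_1,\ldots$, $[d_0,d_1,d_2,\ldots]$ denotes the continued fraction $\cfrac{1}{d_0+\cfrac{1}{d_1+\cfrac{1}{d_2+\cdots}}}$, and for $\beta=[d_0,d_1,\ldots]$ we write $\alpha_j(\beta)=[d_j,d_{j+1},\ldots]$. For integers $m\ge1$, $N\ge1$, $\beta^N$ is the number whose digits (indexed from $0$) are $a_0,\ldots,a_n$ in positions $0,\ldots,n$, $N$ in position $n+m$, and $1$ in all other positions. For such $\beta$ (with $m$ fixed), $\Phi^1(\beta)=\alpha_0(\beta)\alpha_1(\beta)\cdots\alpha_{n+m-1}(\beta)\log\frac{1}{\alpha_{n+m}(\beta)}$. *)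

theory Defs
  imports Complex_Main
begin

fun cf_fin :: "(nat \<Rightarrow> nat) \<Rightarrow> nat \<Rightarrow> real" where
  "cf_fin d 0 = 0"
| "cf_fin d (Suc k) = 1 / (real (d 0) + cf_fin (\<lambda>i. d (Suc i)) k)"

definition cf :: "(nat \<Rightarrow> nat) \<Rightarrow> real" where
  "cf d = lim (\<lambda>k. cf_fin d k)"

definition alpha :: "nat \<Rightarrow> (nat \<Rightarrow> nat) \<Rightarrow> real" where
  "alpha j d = cf (\<lambda>i. d (i + j))"

text \<open>Digit sequence of beta^N: a_0..a_n at positions 0..n, N at position n+m, 1 elsewhere.\<close>
definition beta_digits :: "(nat \<Rightarrow> nat) \<Rightarrow> nat \<Rightarrow> nat \<Rightarrow> nat \<Rightarrow> nat \<Rightarrow> nat" where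
  "beta_digits a n m N i = (if i \<le> n then a i else if i = n + m then N else 1)"

definition Phi1 :: "nat \<Rightarrow> nat \<Rightarrow> (nat \<Rightarrow> nat) \<Rightarrow> real" where
  "Phi1 n m d = (\<Prod>j<n + m. alpha j d) * ln (1 / alpha (n + m) d)"

end

theory Submission
  imports Defs
begin

lemma cf_fin_nonneg: "cf_fin d k \<ge> 0"
  by (induction k arbitrary: d) auto

definition gold :: real where "gold = (sqrt 5 - 1) / 2"

lemma gold_pos: "gold > 0"
proof -
  have "sqrt 5 > sqrt 1" by (subst real_sqrt_less_iff) simp
  thus ?thesis unfolding gold_def by simp
qed

lemma gold_eq: "gold * (1 + gold) = 1"
proof -
  have s: "sqrt 5 * sqrt 5 = 5" by simp
  show ?thesis unfolding gold_def by (simp add: field_simps s algebra_simps)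
qed

lemma ones_bound: "\<bar>cf_fin (\<lambda>i. 1) k - gold\<bar> \<le> gold * (1 / (1 + gold)) ^ k"
proof (induction k)
  case 0
  then show ?case using gold_pos by simp
next
  case (Suc k)
  define x where "x = cf_fin (\<lambda>i. 1) k"
  have x0: "x \<ge> 0" unfolding x_def by (rule cf_fin_nonneg)
  have g0: "gold > 0" by (rule gold_pos)
  have gg: "gold = 1 / (1 + gold)" using gold_eq g0 by (simp add: field_simps)
  have e: "cf_fin (\<lambda>i. 1) (Suc k) = 1 / (1 + x)" unfolding x_def by simp
  have "1 / (1 + x) - gold = 1 / (1 + x) - 1 / (1 + gold)" using gg by simp
  also have "\<dots> = (gold - x) / ((1 + x) * (1 + gold))"
    using x0 g0 by (simp add: field_simps)
  finally have "1 / (1 + x) - gold = (gold - x) / ((1 + x) * (1 + gold))" .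
  hence "\<bar>1 / (1 + x) - gold\<bar> = \<bar>x - gold\<bar> / ((1 + x) * (1 + gold))"
    using x0 g0 by (simp add: abs_minus_commute)
  also have "\<dots> \<le> \<bar>x - gold\<bar> / (1 + gold)"
    using x0 g0 by (intro divide_left_mono) (auto intro: mult_nonneg_nonneg)
  also have "\<dots> \<le> gold * (1 / (1 + gold)) ^ k / (1 + gold)"
    using Suc.IH g0 unfolding x_def by (intro divide_right_mono) auto
  also have "\<dots> = gold * (1 / (1 + gold)) ^ Suc k" by (simp add: field_simps)
  finally show ?case using e by simp
qed

lemma ones_lim: "(\<lambda>k. cf_fin (\<lambda>i. 1) k) \<longlonglongrightarrow> gold"
proof -
  have g0: "gold > 0" by (rule gold_pos)
  have "(\<lambda>k. gold * (1 / (1 + gold)) ^ k) \<longlonglongrightarrow> gold * 0"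
    using g0 by (intro tendsto_mult tendsto_const LIMSEQ_power_zero) auto
  hence h: "(\<lambda>k. gold * (1 / (1 + gold)) ^ k) \<longlonglongrightarrow> 0" by simp
  hence h2: "(\<lambda>k. - (gold * (1 / (1 + gold)) ^ k)) \<longlonglongrightarrow> 0"
    using tendsto_minus by fastforce
  have "(\<lambda>k. cf_fin (\<lambda>i. 1) k - gold) \<longlonglongrightarrow> 0"
  proof (rule tendsto_sandwich[OF _ _ h2 h])
    show "\<forall>\<^sub>F k in sequentially. - (gold * (1 / (1 + gold)) ^ k) \<le> cf_fin (\<lambda>i. 1) k - gold"
      by (intro always_eventually allI) (smt (verit) ones_bound)
    show "\<forall>\<^sub>F k in sequentially. cf_fin (\<lambda>i. 1) k - gold \<le> gold * (1 / (1 + gold)) ^ k"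
      by (intro always_eventually allI) (smt (verit) ones_bound)
  qed
  thus ?thesis by (simp add: LIM_zero_iff)
qed



lemma conv_step:
  assumes "(\<lambda>k. cf_fin (\<lambda>i. d (i + Suc j)) k) \<longlonglongrightarrow> L" "L \<ge> 0" "d j \<ge> 1"
  shows "(\<lambda>k. cf_fin (\<lambda>i. d (i + j)) k) \<longlonglongrightarrow> 1 / (real (d j) + L)"
proof -
  have e: "cf_fin (\<lambda>i. d (i + j)) (Suc k) = 1 / (real (d j) + cf_fin (\<lambda>i. d (i + Suc j)) k)" for k
    by simp
  have "(\<lambda>k. 1 / (real (d j) + cf_fin (\<lambda>i. d (i + Suc j)) k)) \<longlonglongrightarrow> 1 / (real (d j) + L)"
    using assms by (intro tendsto_intros) auto
  hence "(\<lambda>k. cf_fin (\<lambda>i. d (i + j)) (Suc k)) \<longlonglongrightarrow> 1 / (real (d j) + L)"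
    by (simp only: e)
  thus ?thesis by (rule LIMSEQ_imp_Suc)
qed

lemma conv_all:
  assumes dpos: "\<forall>i. d i \<ge> 1"
    and lim: "(\<lambda>k. cf_fin (\<lambda>i. d (i + J)) k) \<longlonglongrightarrow> L" and L0: "L \<ge> 0"
  shows "p \<le> J \<Longrightarrow> (\<lambda>k. cf_fin (\<lambda>i. d (i + (J - p))) k) \<longlonglongrightarrow> alpha (J - p) d \<and> alpha (J - p) d \<ge> 0"
proof (induction p)
  case 0
  have "alpha J d = L" unfolding alpha_def cf_def using lim by (rule limI)
  then show ?case using lim L0 by simp
next
  case (Suc p)
  have jj: "Suc (J - Suc p) = J - p" using Suc.prems by simp
  have IH: "(\<lambda>k. cf_fin (\<lambda>i. d (i + Suc (J - Suc p))) k) \<longlonglongrightarrow> alpha (J - p) d \<and> alpha (J - p) d \<ge> 0"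
    using Suc by (simp only: jj)
  hence c: "(\<lambda>k. cf_fin (\<lambda>i. d (i + (J - Suc p))) k) \<longlonglongrightarrow> 1 / (real (d (J - Suc p)) + alpha (J - p) d)"
    using dpos by (intro conv_step) auto
  hence "alpha (J - Suc p) d = 1 / (real (d (J - Suc p)) + alpha (J - p) d)"
    unfolding alpha_def cf_def by (rule limI)
  with c IH show ?case by simp
qed

lemma alpha_rec:
  assumes dpos: "\<forall>i. d i \<ge> 1"
    and lim: "(\<lambda>k. cf_fin (\<lambda>i. d (i + J)) k) \<longlonglongrightarrow> L" and L0: "L \<ge> 0" and j: "j < J"
  shows "alpha j d * (real (d j) + alpha (Suc j) d) = 1"
proof -
  have a: "(\<lambda>k. cf_fin (\<lambda>i. d (i + Suc j)) k) \<longlonglongrightarrow> alpha (Suc j) d \<and> alpha (Suc j) d \<ge> 0"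
    using conv_all[OF dpos lim L0, of "J - Suc j"] j by simp
  have b: "(\<lambda>k. cf_fin (\<lambda>i. d (i + j)) k) \<longlonglongrightarrow> alpha j d"
    using conv_all[OF dpos lim L0, of "J - j"] j by simp
  have "(\<lambda>k. cf_fin (\<lambda>i. d (i + j)) k) \<longlonglongrightarrow> 1 / (real (d j) + alpha (Suc j) d)"
    using a dpos by (intro conv_step) auto
  with b have "alpha j d = 1 / (real (d j) + alpha (Suc j) d)" by (rule LIMSEQ_unique)
  moreover have "real (d j) + alpha (Suc j) d > 0" using a dpos[rule_format, of j] by simp
  ultimately show ?thesis by simp
qed

fun rr :: "(nat \<Rightarrow> nat) \<Rightarrow> nat \<Rightarrow> nat" where
  "rr d 0 = 0"
| "rr d (Suc 0) = 1"
| "rr d (Suc (Suc k)) = d k * rr d (Suc k) + rr d k"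

lemma prod_ident:
  assumes "\<forall>j<K. x j * (real (d j) + x (Suc j)) = 1"
  shows "k \<le> K \<Longrightarrow> (\<Prod>j<k. x j) * (real (rr d (Suc k)) + x k * real (rr d k)) = 1"
proof (induction k)
  case 0
  then show ?case by simp
next
  case (Suc k)
  have h: "x k * (real (d k) + x (Suc k)) = 1" using assms Suc.prems by auto
  have "(\<Prod>j<Suc k. x j) * (real (rr d (Suc (Suc k))) + x (Suc k) * real (rr d (Suc k)))
      = (\<Prod>j<k. x j) * ((x k * (real (d k) + x (Suc k))) * real (rr d (Suc k)) + x k * real (rr d k))"
    by (simp add: algebra_simps)
  also have "\<dots> = 1" using h Suc by simp
  finally show ?case .
qed

lemma rr_cong: "(\<forall>i<k. d i = e i) \<Longrightarrow> rr d (Suc k) = rr e (Suc k) \<and> rr d k = rr e k"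
  by (induction k) auto

lemma rr_grow:
  assumes "\<forall>i<K. d i \<ge> 1"
  shows "k \<le> K \<Longrightarrow> rr d k \<le> rr d (Suc k) \<and> Suc k \<le> 2 * rr d (Suc k)"
proof (induction k rule: nat_less_induct)
  case (1 k)
  show ?case
  proof (cases k)
    case 0 then show ?thesis by simp
  next
    case (Suc k')
    note k = Suc
    show ?thesis
    proof (cases k')
      case 0
      then show ?thesis using k assms 1 by auto
    next
      case (Suc k'')
      have a: "rr d k'' \<le> rr d k' \<and> Suc k'' \<le> 2 * rr d k'"
        using 1 k Suc by auto
      have b: "rr d k' \<le> rr d k \<and> Suc k' \<le> 2 * rr d k"
        using 1 k Suc by auto
      have dk: "d k' \<ge> 1" using assms 1(2) k by auto
      have e: "rr d (Suc k) = d k' * rr d k + rr d k'" using k by simp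
      have m: "d k' * rr d k \<ge> rr d k" using dk by simp
      have kk: "k = Suc (Suc k'')" using k Suc by simp
      from a have a2: "Suc k'' \<le> 2 * rr d k'" by simp
      from b have b1: "rr d k' \<le> rr d k" and b2: "Suc k' \<le> 2 * rr d k" by simp_all
      have "rr d k \<le> d k' * rr d k + rr d k'" using m by linarith
      moreover have "Suc k \<le> 2 * (d k' * rr d k + rr d k')" using a2 b2 m kk Suc by (simp only: distrib_left)
      ultimately show ?thesis unfolding e by simp
    qed
  qed
qed



lemma key_ineq:
  fixes A B t :: real
  assumes A: "A \<ge> 1" and B: "0 \<le> B" "B \<le> A" and t: "t \<ge> 1"
  shows "ln (t + 1) / (A + B / (t + 1)) - ln t / (A + B / t) \<le> 2 / A"
proof -
  have lt0: "ln t \<ge> 0" using t by simp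
  have l1: "ln (t + 1) \<ge> 0" using t by simp
  have f1: "ln (t + 1) / (A + B / (t + 1)) \<le> ln (t + 1) / A"
  proof -
    have "A + B / (t + 1) \<ge> A" using B t by simp
    moreover have "0 < (A + B / (t + 1)) * A" using A \<open>A + B / (t + 1) \<ge> A\<close> by (intro mult_pos_pos) auto
    ultimately show ?thesis using A l1 by (intro divide_left_mono) auto
  qed
  have Bt: "B / t \<ge> 0" using B t by simp
  have "ln t / A - ln t / (A + B / t) = ln t * (B / t) / (A * (A + B / t))"
  proof -
    have "A \<noteq> 0" "A + B / t \<noteq> 0" using A Bt by linarith+
    moreover have "A * t > 0" using A t by simp
    hence "t \<noteq> 0" "B + A * t \<noteq> 0" "A * t + B \<noteq> 0" using B t by linarith+
    ultimately show ?thesis by (simp add: divide_simps) (simp add: algebra_simps)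
  qed
  also have "\<dots> \<le> ln t * (B / t) / (A * A)"
  proof -
    have "A * A \<le> A * (A + B / t)" using A Bt by (intro mult_left_mono) auto
    moreover have "0 < A * A" using A by simp
    moreover have "0 \<le> ln t * (B / t)" using lt0 Bt by (rule mult_nonneg_nonneg)
    ultimately show ?thesis by (intro divide_left_mono) (auto intro: mult_pos_pos)
  qed
  also have "\<dots> \<le> ln t * (A / t) / (A * A)"
    using A B t lt0 by (intro divide_right_mono mult_left_mono) auto
  also have "\<dots> = (ln t / t) / A" using A by (simp add: field_simps)
  also have "\<dots> \<le> 1 / A"
  proof -
    have "ln t \<le> t" using ln_le_minus_one[of t] t by simp
    hence "ln t / t \<le> 1" using t by simp
    thus ?thesis using A by (intro divide_right_mono) auto
  qed
  finally have f2: "ln t / A - ln t / (A + B / t) \<le> 1 / A" .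
  have "ln (t + 1) - ln t = ln ((t + 1) / t)" using t by (simp add: ln_div)
  also have "\<dots> \<le> (t + 1) / t - 1" using t by (intro ln_le_minus_one) auto
  also have "\<dots> = 1 / t" using t by (simp add: field_simps)
  also have "\<dots> \<le> 1" using t by simp
  finally have "ln (t + 1) - ln t \<le> 1" .
  hence f3: "ln (t + 1) / A - ln t / A \<le> 1 / A"
    using A by (simp add: diff_divide_distrib[symmetric] divide_right_mono)
  have "2 / A = 1 / A + 1 / A" by simp
  thus ?thesis using f1 f2 f3 by linarith
qed

lemma bd_pos:
  assumes "\<forall>i\<le>n. a i > 0" "N > 0"
  shows "\<forall>i. beta_digits a n m N i \<ge> 1"
  using assms unfolding beta_digits_def by (auto simp: Suc_le_eq)

lemma phi_formula:
  assumes apos: "\<forall>i\<le>n. a i > 0" and m: "m \<ge> 1" and N: "N > 0"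
  defines "D \<equiv> beta_digits a n m N"
  shows "Phi1 n m D = ln (real N + gold) /
           (real (rr D (Suc (n + m))) + real (rr D (n + m)) / (real N + gold))"
proof -
  define K where "K = n + m"
  have dpos: "\<forall>i. D i \<ge> 1" unfolding D_def using bd_pos[OF apos N] .
  have ones: "(\<lambda>i. D (i + Suc K)) = (\<lambda>i. 1)"
    unfolding D_def K_def beta_digits_def by auto
  have DK: "D K = N" unfolding D_def K_def beta_digits_def using m by auto
  have g0: "gold > 0" by (rule gold_pos)
  have tl: "(\<lambda>k. cf_fin (\<lambda>i. D (i + K)) k) \<longlonglongrightarrow> 1 / (real (D K) + gold)"
  proof (rule conv_step)
    show "(\<lambda>k. cf_fin (\<lambda>i. D (i + Suc K)) k) \<longlonglongrightarrow> gold"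
      unfolding ones by (rule ones_lim)
  qed (use g0 dpos in auto)
  hence tl': "(\<lambda>k. cf_fin (\<lambda>i. D (i + K)) k) \<longlonglongrightarrow> 1 / (real N + gold)" by (simp add: DK)
  have L0: "1 / (real N + gold) \<ge> 0" using g0 by simp
  have aK: "alpha K D = 1 / (real N + gold)" unfolding alpha_def cf_def using tl' by (rule limI)
  have rec: "\<forall>j<K. alpha j D * (real (D j) + alpha (Suc j) D) = 1"
    using alpha_rec[OF dpos tl' L0] by blast
  have P: "(\<Prod>j<K. alpha j D) * (real (rr D (Suc K)) + alpha K D * real (rr D K)) = 1"
    using prod_ident[OF rec, of K] by simp
  have pos: "real N + gold > 0" using g0 by simp
  have "Phi1 n m D = (\<Prod>j<K. alpha j D) * ln (real N + gold)"
    unfolding Phi1_def K_def[symmetric] aK by simp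
  also have "(\<Prod>j<K. alpha j D) = 1 / (real (rr D (Suc K)) + real (rr D K) / (real N + gold))"
  proof -
    define X where "X = real (rr D (Suc K)) + real (rr D K) / (real N + gold)"
    have e: "alpha K D * real (rr D K) = real (rr D K) / (real N + gold)" by (simp add: aK)
    have P': "(\<Prod>j<K. alpha j D) * X = 1" using P unfolding X_def e .
    hence "X \<noteq> 0" by auto
    thus ?thesis using P' unfolding X_def[symmetric] by (simp add: eq_divide_eq)
  qed
  finally show ?thesis unfolding K_def by simp
qed



theorem mainTheorem8:
  fixes a :: "nat \<Rightarrow> nat" and n :: nat
  assumes "\<forall>i\<le>n. a i > 0"
  shows "\<forall>\<epsilon>>0. \<exists>m0::nat. m0 > 0 \<and> (\<forall>m\<ge>m0. \<forall>N::nat. N > 0 \<longrightarrow>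
           Phi1 n m (beta_digits a n m (N + 1)) - Phi1 n m (beta_digits a n m N) < \<epsilon> / 2)"
proof (intro allI impI)
  fix \<epsilon> :: real
  assume ep: "\<epsilon> > 0"
  define m0 where "m0 = nat \<lceil>8 / \<epsilon>\<rceil> + 1"
  show "\<exists>m0::nat. m0 > 0 \<and> (\<forall>m\<ge>m0. \<forall>N::nat. N > 0 \<longrightarrow>
           Phi1 n m (beta_digits a n m (N + 1)) - Phi1 n m (beta_digits a n m N) < \<epsilon> / 2)"
  proof (intro exI conjI allI impI)
    show "m0 > 0" unfolding m0_def by simp
    fix m N :: nat
    assume mm: "m0 \<le> m" and N: "N > 0"
    have m1: "m \<ge> 1" using mm unfolding m0_def by simp
    define K where "K = n + m"
    define D1 where "D1 = beta_digits a n m N"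
    define D2 where "D2 = beta_digits a n m (N + 1)"
    define A where "A = rr D1 (Suc K)"
    define B where "B = rr D1 K"
    have agree: "\<forall>i<K. D2 i = D1 i" unfolding D1_def D2_def K_def beta_digits_def by auto
    have AB2: "rr D2 (Suc K) = A \<and> rr D2 K = B"
      using rr_cong[OF agree] unfolding A_def B_def by simp
    have dpos: "\<forall>i<K. D1 i \<ge> 1" using bd_pos[OF assms N] unfolding D1_def by simp
    have gr: "rr D1 K \<le> rr D1 (Suc K) \<and> Suc K \<le> 2 * rr D1 (Suc K)"
      using rr_grow[OF dpos] by simp
    hence BA: "B \<le> A" and KA: "Suc K \<le> 2 * A" unfolding A_def B_def by simp_all
    hence A1: "A \<ge> 1" by simp
    define t where "t = real N + gold"
    have t1: "t \<ge> 1" unfolding t_def using N gold_pos by simp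
    have e1: "Phi1 n m D1 = ln t / (real A + real B / t)"
      using phi_formula[OF assms m1 N] unfolding D1_def[symmetric] A_def B_def K_def t_def .
    have e2: "Phi1 n m D2 = ln (t + 1) / (real A + real B / (t + 1))"
    proof -
      have "Phi1 n m D2 = ln (real (N + 1) + gold) /
           (real (rr D2 (Suc (n + m))) + real (rr D2 (n + m)) / (real (N + 1) + gold))"
        using phi_formula[OF assms m1, of "N + 1"] unfolding D2_def by simp
      also have "real (N + 1) + gold = t + 1" unfolding t_def by simp
      finally show ?thesis using AB2 unfolding K_def by simp
    qed
    have "Phi1 n m D2 - Phi1 n m D1 \<le> 2 / real A"
      unfolding e1 e2 using A1 BA t1 by (intro key_ineq) auto
    also have "\<dots> \<le> 4 / (real m + 1)"
    proof -
      have "real (Suc K) \<le> 2 * real A" using KA by linarith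
      hence "real m + 1 \<le> 2 * real A" unfolding K_def by simp
      thus ?thesis using A1 by (simp add: field_simps)
    qed
    also have "\<dots> < \<epsilon> / 2"
    proof -
      have "8 / \<epsilon> \<le> real (nat \<lceil>8 / \<epsilon>\<rceil>)" by linarith
      hence "8 / \<epsilon> < real m + 1" using mm unfolding m0_def by linarith
      hence "8 < (real m + 1) * \<epsilon>" using ep by (simp add: field_simps)
      thus ?thesis using ep by (simp add: field_simps)
    qed
    finally show "Phi1 n m (beta_digits a n m (N + 1)) - Phi1 n m (beta_digits a n m N) < \<epsilon> / 2"
      unfolding D1_def D2_def .
  qed
qed


end
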